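(* Let $n\ge 1$ and $F=F_n(z_n)$. For $k=1,\dots,n$ define the $n\times n$ matrix $$E_k=M_k(2)-f_{k|n}\,e_{k|n}^T,$$ where $M_k(2)$ is the identity matrix with its $(k,k)$ entry replaced by $2$. Then $$F^{-1}=E_nE_{n-1}\cdots E_2E_1,$$ i.e. $F^{-1}=\prod_{i=1}^n\Big(M_{n+1-i}(2)-f_{n+1-i|n}\,e_{n+1-i|n}^T\Big)$ with the factors multiplied from left to right in order of increasing $i$.
   Context: $e_{k|n}\in\mathbb{R}^n$ denotes the $k$-th standard basis vector. For $1\le i\le n$, $e_{\bar i|n}\in\mathbb{R}^n$ has $k$-th entry $1$ if $i\mid k$, else $0$. For $2\le i\le n$, $f_{i|n}=\sum_{t=1}^{\lfloor \log_i n\rfloor} e_{\overline{i^t}|n}$, and by convention $f_{1|n}=1_n$ (all-ones vector). $F_n(z_n)=[f_{1|n}\ f_{2|n}\ \cdots\ f_{n|n}]\in\mathbb{R}^{n\times n}$. *)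

theory Defs
  imports "Jordan_Normal_Form.Matrix" Complex_Main
begin

text \<open>All vectors/matrices are over the reals, of dimension n. Paper indices 1..n
  correspond to JNF indices 0..n-1 (paper index k is JNF index k-1).\<close>

definition e_std :: "nat \<Rightarrow> nat \<Rightarrow> real vec" where
  "e_std k n = vec n (\<lambda>j. if j + 1 = k then 1 else 0)"

definition e_bar :: "nat \<Rightarrow> nat \<Rightarrow> real vec" where
  "e_bar i n = vec n (\<lambda>j. if i dvd (j + 1) then 1 else 0)"

definition f_vec :: "nat \<Rightarrow> nat \<Rightarrow> real vec" where
  "f_vec i n = (if i = 1 then vec n (\<lambda>j. 1)
     else vec n (\<lambda>j. \<Sum>t\<in>{1..nat \<lfloor>log (real i) (real n)\<rfloor>}. e_bar (i ^ t) n $ j))"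

definition F_mat :: "nat \<Rightarrow> real mat" where
  "F_mat n = mat n n (\<lambda>(r, c). f_vec (c + 1) n $ r)"

definition M2 :: "nat \<Rightarrow> nat \<Rightarrow> real mat" where
  "M2 k n = mat n n (\<lambda>(r, c). if r = c then (if r + 1 = k then 2 else 1) else 0)"

definition outer :: "real vec \<Rightarrow> real vec \<Rightarrow> real mat" where
  "outer u v = mat (dim_vec u) (dim_vec v) (\<lambda>(r, c). u $ r * v $ c)"

definition E_mat :: "nat \<Rightarrow> nat \<Rightarrow> real mat" where
  "E_mat k n = M2 k n - outer (f_vec k n) (e_std k n)"

end

theory Submission
  imports Defs "Jordan_Normal_Form.Determinant"
begin

lemma log_ge1: "2 \<le> i \<Longrightarrow> i \<le> n \<Longrightarrow> 1 \<le> nat \<lfloor>log (real i) (real n)\<rfloor>"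
proof -
  assume a: "2 \<le> i" "i \<le> n"
  have "1 \<le> log (real i) (real n)" using a by (subst le_log_iff) auto
  thus ?thesis by linarith
qed

lemma pow_dvd_self: "2 \<le> (i::nat) \<Longrightarrow> 1 \<le> t \<Longrightarrow> i ^ t dvd i \<Longrightarrow> t = 1"
proof (rule ccontr)
  assume a: "2 \<le> i" "1 \<le> t" "i ^ t dvd i" "t \<noteq> 1"
  hence "i ^ 2 \<le> i ^ t" by (intro power_increasing) auto
  moreover have "i ^ t \<le> i" using a dvd_imp_le by auto
  moreover have "i < i ^ 2" using a by (simp add: power2_eq_square)
  ultimately show False by simp
qed

lemma f_below: "c < n \<Longrightarrow> j < c \<Longrightarrow> f_vec (c+1) n $ j = 0"
proof -
  assume a: "c < n" "j < c"
  have "\<And>t. t \<ge> 1 \<Longrightarrow> \<not> (c+1)^t dvd (j+1)"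
  proof
    fix t :: nat assume t: "t \<ge> 1" and d: "(c+1)^t dvd (j+1)"
    have "c + 1 \<le> (c+1)^t" using t by (metis One_nat_def le_add2 one_le_numeral power_increasing power_one_right zero_less_Suc add.commute Suc_eq_plus1 le_eq_less_or_eq less_Suc_eq_le self_le_power zero_less_one)
    moreover have "(c+1)^t \<le> j+1" using d dvd_imp_le by auto
    ultimately show False using a by simp
  qed
  thus ?thesis using a unfolding f_vec_def e_bar_def by auto
qed

lemma f_diag: "c < n \<Longrightarrow> f_vec (c+1) n $ c = 1"
proof (cases "c = 0")
  case True
  assume "c < n" thus ?thesis using True unfolding f_vec_def by auto
next
  case False
  assume a: "c < n"
  let ?L = "nat \<lfloor>log (real (c+1)) (real n)\<rfloor>"
  have L: "1 \<le> ?L" using False a by (intro log_ge1) auto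
  have "f_vec (c+1) n $ c = (\<Sum>t\<in>{1..?L}. if (c+1)^t dvd (c+1) then 1 else 0)"
  proof -
    have ne: "(c + 1 = 1) = False" using False by simp
    show ?thesis unfolding f_vec_def e_bar_def ne if_False using a
      by (simp only: index_vec)
  qed
  also have "\<dots> = (\<Sum>t\<in>{1..?L}. if t = 1 then 1 else (0::real))"
  proof (rule sum.cong)
    fix t assume "t \<in> {1..?L}"
    hence t1: "1 \<le> t" by simp
    show "(if (c+1) ^ t dvd (c+1) then 1 else 0) = (if t = 1 then 1 else (0::real))"
    proof (cases "t = 1")
      case True thus ?thesis by simp
    next
      case F: False
      have "\<not> (c+1) ^ t dvd (c+1)" using pow_dvd_self[of "c+1" t] False t1 F by linarith
      thus ?thesis using F by (simp only: if_False)
    qed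
  qed simp
  also have "\<dots> = 1" using L by simp
  finally show ?thesis .
qed

definition Fm :: "nat \<Rightarrow> nat \<Rightarrow> real mat" where
  "Fm n m = mat n n (\<lambda>(r,c). if c < m then F_mat n $$ (r,c) else (if r = c then 1 else 0))"

lemma Fm_carrier[simp]: "Fm n m \<in> carrier_mat n n" unfolding Fm_def by auto
lemma E_carrier[simp]: "E_mat k n \<in> carrier_mat n n"
  unfolding E_mat_def M2_def outer_def f_vec_def e_std_def by auto

lemma E_dims[simp]: "dim_row (E_mat k n) = n" "dim_col (E_mat k n) = n"
  using E_carrier[of k n] by (blast dest: carrier_matD)+

lemma E_index: "j < n \<Longrightarrow> c < n \<Longrightarrow> E_mat k n $$ (j,c) =
  (if j = c then (if j + 1 = k then 2 else 1) else 0) - f_vec k n $ j * (if c + 1 = k then 1 else 0)"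
  unfolding E_mat_def M2_def outer_def
  by (auto simp: f_vec_def e_std_def)

lemma key: assumes "c < n" shows "Fm n (c+1) * E_mat (c+1) n = Fm n c"
proof (rule eq_matI)
  fix r d assume r: "r < dim_row (Fm n c)" and d: "d < dim_col (Fm n c)"
  hence r: "r < n" and d: "d < n" by (auto simp: Fm_def)
  let ?f = "f_vec (c+1) n"
  have "(Fm n (c+1) * E_mat (c+1) n) $$ (r,d) = (\<Sum>j<n. Fm n (c+1) $$ (r,j) * E_mat (c+1) n $$ (j,d))"
    using r d by (simp add: scalar_prod_def lessThan_atLeast0 Fm_carrier[THEN carrier_matD(1)] Fm_carrier[THEN carrier_matD(2)])
  also have "\<dots> = Fm n c $$ (r,d)"
  proof (cases "d = c")
    case False
    have "(\<Sum>j<n. Fm n (c+1) $$ (r,j) * E_mat (c+1) n $$ (j,d)) = (\<Sum>j<n. if j = d then Fm n (c+1) $$ (r,d) else 0)"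
      by (rule sum.cong) (use d False in \<open>auto simp: E_index\<close>)
    also have "\<dots> = Fm n c $$ (r,d)" using d r False by (simp add: Fm_def)
    finally show ?thesis .
  next
    case True
    have "(\<Sum>j<n. Fm n (c+1) $$ (r,j) * E_mat (c+1) n $$ (j,d)) =
      (\<Sum>j<n. (if j = c then 2 * ?f $ r else 0) - ((if j = c then ?f $ r else 0) + (if j = r \<and> c < r then ?f $ r else 0)))"
    proof (rule sum.cong)
      fix j assume j: "j \<in> {..<n}"
      show "Fm n (c+1) $$ (r,j) * E_mat (c+1) n $$ (j,d) = (if j = c then 2 * ?f $ r else 0) - ((if j = c then ?f $ r else 0) + (if j = r \<and> c < r then ?f $ r else 0))"
        using j True r assms f_below[of c n j] f_diag[of c n]
        by (cases "j < c"; cases "j = c"; auto simp: E_index Fm_def F_mat_def)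
    qed simp
    also have "\<dots> = (if r \<le> c then ?f $ r else 0)"
      using r assms by (simp add: sum_subtractf sum.distrib)
    also have "\<dots> = Fm n c $$ (r,d)"
      using True r assms f_below[of c n r] f_diag[of c n] by (auto simp: Fm_def)
    finally show ?thesis .
  qed
  finally show "(Fm n (c+1) * E_mat (c+1) n) $$ (r,d) = Fm n c $$ (r,d)" .
qed (auto simp: Fm_def)

lemma foldl_Fm: "m \<le> n \<Longrightarrow> foldl (*) (Fm n m) (map (\<lambda>i. E_mat i n) (rev [1..<m+1])) = 1\<^sub>m n"
proof (induction m)
  case 0
  show ?case by (auto simp: Fm_def)
next
  case (Suc m)
  have "rev [1..<Suc m + 1] = Suc m # rev [1..<m+1]" by simp
  hence "foldl (*) (Fm n (Suc m)) (map (\<lambda>i. E_mat i n) (rev [1..<Suc m+1]))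
      = foldl (*) (Fm n (Suc m) * E_mat (Suc m) n) (map (\<lambda>i. E_mat i n) (rev [1..<m+1]))" by simp
  also have "Fm n (Suc m) * E_mat (Suc m) n = Fm n m" using key[of m n] Suc by simp
  finally show ?case using Suc by simp
qed

lemma foldl_assoc: "A \<in> carrier_mat n n \<Longrightarrow> B \<in> carrier_mat n n \<Longrightarrow> \<forall>x\<in>set xs. x \<in> carrier_mat n n \<Longrightarrow>
  foldl (*) (A * B) xs = A * foldl (*) B xs"
proof (induction xs arbitrary: B)
  case (Cons x xs)
  have "foldl (*) (A * B) (x # xs) = foldl (*) (A * (B * x)) xs"
    using Cons.prems by (simp add: assoc_mult_mat[of A n n B n x n])
  also have "\<dots> = A * foldl (*) (B * x) xs" using Cons by (intro Cons.IH) auto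
  finally show ?case by simp
qed simp

lemma foldl_carrier: "B \<in> carrier_mat n n \<Longrightarrow> \<forall>x\<in>set xs. x \<in> carrier_mat n n \<Longrightarrow>
  foldl (*) B xs \<in> carrier_mat n n"
  by (induction xs arbitrary: B) auto

theorem theorem5:
  fixes n :: nat
  assumes "n \<ge> 1"
  shows "F_mat n * foldl (*) (1\<^sub>m n) (map (\<lambda>i. E_mat (n + 1 - i) n) [1..<n+1]) = 1\<^sub>m n
       \<and> foldl (*) (1\<^sub>m n) (map (\<lambda>i. E_mat (n + 1 - i) n) [1..<n+1]) * F_mat n = 1\<^sub>m n"
proof -
  have lst: "map (\<lambda>i. E_mat (n + 1 - i) n) [1..<n+1] = map (\<lambda>i. E_mat i n) (rev [1..<n+1])"
    by (rule nth_equalityI) (auto simp del: upt_Suc simp add: rev_nth nth_upt Suc_diff_Suc)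
  have FF: "Fm n n = F_mat n" by (rule eq_matI) (auto simp: Fm_def F_mat_def)
  have Fc: "F_mat n \<in> carrier_mat n n" by (simp add: F_mat_def)
  let ?Q = "foldl (*) (1\<^sub>m n) (map (\<lambda>i. E_mat (n + 1 - i) n) [1..<n+1])"
  have Qc: "?Q \<in> carrier_mat n n" by (rule foldl_carrier) auto
  have "F_mat n * ?Q = foldl (*) (F_mat n * 1\<^sub>m n) (map (\<lambda>i. E_mat (n + 1 - i) n) [1..<n+1])"
    by (rule foldl_assoc[symmetric]) (auto simp: Fc)
  also have "\<dots> = 1\<^sub>m n" using foldl_Fm[of n n] FF Fc lst by simp
  finally have 1: "F_mat n * ?Q = 1\<^sub>m n" .
  moreover have "?Q * F_mat n = 1\<^sub>m n" by (rule mat_mult_left_right_inverse[OF Fc Qc 1])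
  ultimately show ?thesis by simp
qed

end
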